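(* Let $c>0$, let $v\in\mathbb{R}^d$, and let $\xi$ be a random vector in $\mathbb{R}^d$ with density $\tilde p$ satisfying $\tilde p(\xi)=\tilde p(-\xi)$ for all $\xi$. Let $g=\mathrm{clip}(v+\xi,c)$. Then: 1. If $\|v\|\le\frac34 c$, then $\mathbb{E}_{\xi\sim\tilde p}[\langle v,g\rangle]\ge\|v\|^2\,\mathbb{P}_{\xi\sim\tilde p}\left(\|\xi\|<\frac c4\right)$. 2. If $\|v\|>\frac34 c$, then $\mathbb{E}_{\xi\sim\tilde p}[\langle v,g\rangle]\ge\frac34 c\,\|v\|\,\mathbb{P}_{\xi\sim\tilde p}\left(\|\xi\|<\frac c4\right)$.
   Context: For $g\in\mathbb{R}^d$ and $c>0$, $\mathrm{clip}(g,c)=g\cdot\min\left(1,\frac{c}{\|g\|}\right)$ (with $\mathrm{clip}(0,c)=0$); $\|\cdot\|$ is the Euclidean norm. In the paper $v$ is the true gradient $\nabla f(x_t)$ at the current iterate and $\xi$ the gradient noise. *)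

theory Defs
  imports "HOL-Analysis.Analysis"
begin

definition clip :: "'a::real_normed_vector \<Rightarrow> real \<Rightarrow> 'a" where
  "clip g c = (if g = 0 then 0 else min 1 (c / norm g) *\<^sub>R g)"

end

theory Submission imports Defs begin

lemma clip_eq: "clip g c = min 1 (c / norm g) *\<^sub>R g"
  by (simp add: clip_def)

lemma clip_meas[measurable]: "(\<lambda>x::'a::euclidean_space. clip x c) \<in> borel_measurable borel"
  unfolding clip_eq by measurable

lemma norm_clip: "c > 0 \<Longrightarrow> norm (clip g c) \<le> c"
  unfolding clip_eq by (auto simp: min_def field_simps)

lemma refl_lborel: "distr lborel borel uminus = (lborel::'a::euclidean_space measure)"
using lborel_affine[of "-1::real" "0::'a"] by (simp add: density_1)

lemma clip_small: "c > 0 \<Longrightarrow> norm g \<le> c \<Longrightarrow> clip g c = g"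
  unfolding clip_eq by (cases "g = 0") (auto simp: min_def field_simps)

lemma mul_min: "c > 0 \<Longrightarrow> min 1 (c / n) * n = min n c" if "n \<ge> 0" for n c :: real
  using that by (cases "n = 0") (auto simp: min_def field_simps)

lemma pair_nonneg:
  fixes v xi :: "'a::euclidean_space"
  assumes c: "c > 0"
  shows "0 \<le> inner v (clip (v + xi) c) + inner v (clip (v - xi) c)"
proof -
  define a where "a = v + xi"
  define b where "b = v - xi"
  define na where "na = norm a"
  define nb where "nb = norm b"
  define al where "al = min 1 (c / na)"
  define be where "be = min 1 (c / nb)"
  have alA: "al * na = min na c" unfolding al_def na_def using mul_min c by simp
  have beB: "be * nb = min nb c" unfolding be_def nb_def using mul_min c by simp
  have al0: "al \<ge> 0" "be \<ge> 0" unfolding al_def be_def na_def nb_def using c by auto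
  have v: "v = (1/2) *\<^sub>R (a + b)" unfolding a_def b_def by (simp add: algebra_simps flip: scaleR_add_left)
  have ca: "clip (v + xi) c = al *\<^sub>R a" unfolding clip_eq al_def na_def a_def ..
  have cb: "clip (v - xi) c = be *\<^sub>R b" unfolding clip_eq be_def nb_def b_def ..
  have e: "inner v (clip (v + xi) c) + inner v (clip (v - xi) c)
     = (1/2) * (al * na^2 + be * nb^2 + (al + be) * inner a b)"
    unfolding ca cb unfolding v na_def nb_def
    by (simp add: inner_add_left inner_add_right
         power2_norm_eq_inner inner_commute algebra_simps)
  have cs: "inner a b \<ge> - (na * nb)" unfolding na_def nb_def
    using norm_cauchy_schwarz[of "-a" b] by simp
  have "(al + be) * inner a b \<ge> (al + be) * (- (na * nb))"
    using cs al0 by (intro mult_left_mono) auto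
  moreover have "al * na^2 + be * nb^2 - (al + be) * (na * nb) = (min na c - min nb c) * (na - nb)"
  proof -
    have 1: "al * na^2 = min na c * na" using alA by (simp add: power2_eq_square mult.assoc[symmetric])
    have 2: "be * nb^2 = min nb c * nb" using beB by (simp add: power2_eq_square mult.assoc[symmetric])
    have 3: "al * (na * nb) = min na c * nb" using alA by (simp add: mult.assoc[symmetric])
    have 4: "be * (na * nb) = min nb c * na" using beB by (simp add: mult.commute mult.left_commute)
    show ?thesis unfolding distrib_right 1 2 3 4 by (simp add: algebra_simps)
  qed
  moreover have "(min na c - min nb c) * (na - nb) \<ge> 0"
    by (cases "na \<le> nb") (auto intro: mult_nonneg_nonneg mult_nonpos_nonpos)
  ultimately have "0 \<le> al * na^2 + be * nb^2 + (al + be) * inner a b"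
    unfolding mult_minus_right by linarith
  then show ?thesis unfolding e by simp
qed

lemma pair_small:
  fixes v xi :: "'a::euclidean_space"
  assumes c: "c > 0" and x: "norm xi < c/4" and r: "norm v \<le> 3/4*c"
  shows "inner v (clip (v + xi) c) + inner v (clip (v - xi) c) \<ge> 2 * (norm v)^2"
proof -
  have "norm (v + xi) \<le> c" using norm_triangle_ineq[of v xi] x r by linarith
  moreover have "norm (v - xi) \<le> c" using norm_triangle_ineq4[of v xi] x r by linarith
  ultimately show ?thesis using c
    by (simp add: clip_small inner_add_right inner_diff_right power2_norm_eq_inner)
qed


lemma pair_large:
  fixes v xi :: "'a::euclidean_space"
  assumes c: "c > 0" and x: "norm xi < c/4" and r: "norm v > 3/4*c"
  shows "inner v (clip (v + xi) c) + inner v (clip (v - xi) c) \<ge> 2 * (3/4 * c * norm v)"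
proof -
  define rr where "rr = norm v"
  define xx where "xx = norm xi"
  define m where "m = min 1 (c / (rr + xx))"
  have x0: "xx \<ge> 0" unfolding xx_def by simp
  have rx: "xx < rr" "3 * xx < rr" using x r c unfolding rr_def xx_def by linarith+
  have m0: "m \<ge> 0" unfolding m_def using c rx x0 by auto
  have i1: "inner v (v + xi) \<ge> 0" "inner v (v - xi) \<ge> 0"
  proof -
    have "inner v xi \<le> rr * xx" "- inner v xi \<le> rr * xx"
      using norm_cauchy_schwarz[of v xi] norm_cauchy_schwarz[of v "-xi"] unfolding rr_def xx_def by auto
    moreover have "rr * xx \<le> rr * rr" using rx x0 by (intro mult_left_mono) auto
    ultimately show "inner v (v + xi) \<ge> 0" "inner v (v - xi) \<ge> 0"
      by (auto simp: inner_add_right inner_diff_right rr_def power2_norm_eq_inner[symmetric] power2_eq_square)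
  qed
  have tb: "inner v (clip w c) \<ge> m * inner v w"
    if w1: "norm w \<le> rr + xx" and w2: "norm w \<ge> rr - xx" and iw: "inner v w \<ge> 0" for w
  proof -
    have wpos: "norm w > 0" using w2 rx by linarith
    have "c / (rr + xx) \<le> c / norm w" using c wpos w1 rx x0 by (intro divide_left_mono) (auto intro!: mult_pos_pos)
    then have "m \<le> min 1 (c / norm w)" unfolding m_def by auto
    then show ?thesis unfolding clip_eq using iw by (simp add: mult_right_mono)
  qed
  have "inner v (clip (v + xi) c) \<ge> m * inner v (v + xi)"
    using norm_triangle_ineq[of v xi] norm_triangle_ineq2[of v "-xi"] i1
    by (intro tb) (auto simp: rr_def xx_def)
  moreover have "inner v (clip (v - xi) c) \<ge> m * inner v (v - xi)"
    using norm_triangle_ineq4[of v xi] norm_triangle_ineq2[of v xi] i1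
    by (intro tb) (auto simp: rr_def xx_def)
  moreover have "m * inner v (v + xi) + m * inner v (v - xi) = m * (2 * rr^2)"
    by (simp add: inner_add_right inner_diff_right rr_def power2_norm_eq_inner algebra_simps)
  moreover have "m * (2 * rr^2) \<ge> 2 * (3/4 * c * rr)"
  proof (cases "rr + xx \<le> c")
    case True
    then have "m = 1" unfolding m_def using rx x0 by auto
    then show ?thesis using r c unfolding rr_def[symmetric] by (simp add: power2_eq_square mult_right_mono)
  next
    case False
    then have mm: "m = c / (rr + xx)" unfolding m_def using rx x0 c by auto
    have "3/2 * c * rr * (rr + xx) \<le> c * (2 * rr^2)"
    proof -
      have "3/2 * (rr + xx) \<le> 2 * rr" using rx by (simp add: field_simps)
      then have "c * rr * (3/2 * (rr + xx)) \<le> c * rr * (2 * rr)"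
        using c rx x0 by (intro mult_left_mono) auto
      then show ?thesis by (simp add: power2_eq_square algebra_simps)
    qed
    then show ?thesis unfolding mm using rx x0 by (simp add: field_simps)
  qed
  ultimately show ?thesis unfolding rr_def by linarith
qed

theorem theorem2:
  fixes c :: real and v :: "'a::euclidean_space" and p :: "'a \<Rightarrow> real"
  assumes c_pos: "c > 0"
    and p_meas: "p \<in> borel_measurable lborel"
    and p_nonneg: "\<And>x. p x \<ge> 0"
    and p_int: "(\<integral>\<^sup>+ x. ennreal (p x) \<partial>lborel) = 1"
    and p_sym: "\<And>x. p x = p (- x)"
  shows "(norm v \<le> 3/4 * c \<longrightarrow>
           (\<integral>\<xi>. inner v (clip (v + \<xi>) c) \<partial>(density lborel (\<lambda>x. ennreal (p x))))
             \<ge> (norm v)\<^sup>2 * measure (density lborel (\<lambda>x. ennreal (p x))) {\<xi>. norm \<xi> < c / 4})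
       \<and> (norm v > 3/4 * c \<longrightarrow>
           (\<integral>\<xi>. inner v (clip (v + \<xi>) c) \<partial>(density lborel (\<lambda>x. ennreal (p x))))
             \<ge> 3/4 * c * norm v * measure (density lborel (\<lambda>x. ennreal (p x))) {\<xi>. norm \<xi> < c / 4})"
proof -
  define M where "M = density lborel (\<lambda>x. ennreal (p x))"
  define f where "f = (\<lambda>xi::'a. inner v (clip (v + xi) c))"
  define S where "S = {xi::'a. norm xi < c / 4}"
  have sM: "sets M = sets borel" unfolding M_def by simp
  have S_sets: "S \<in> sets M" unfolding sM S_def by measurable
  have ps: "emeasure M (space M) = 1" unfolding M_def
      using p_meas by (subst emeasure_density) (auto simp: p_int)
  interpret finite_measure M by (rule finite_measureI) (simp add: ps)
  have fm[measurable]: "f \<in> borel_measurable borel" unfolding f_def by measurable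
  have fm2: "f \<in> borel_measurable M" unfolding M_def by measurable
  have fmn: "(\<lambda>x. f (- x)) \<in> borel_measurable M" unfolding M_def by measurable
  have fb: "norm (f x) \<le> norm v * c" for x
  proof -
    have "norm (f x) \<le> norm v * norm (clip (v + x) c)" unfolding f_def
      using Cauchy_Schwarz_ineq2[of v "clip (v + x) c"] by simp
    also have "\<dots> \<le> norm v * c" using norm_clip[OF c_pos] by (intro mult_left_mono) auto
    finally show ?thesis .
  qed
  have fi: "integrable M f" by (rule integrable_const_bound[where B="norm v * c"]) (use fb fm2 in auto)
  have fin: "integrable M (\<lambda>x. f (- x))"
    by (rule integrable_const_bound[where B="norm v * c"]) (use fb fmn in auto)
  have dens: "integral\<^sup>L M g = integral\<^sup>L lborel (\<lambda>x. p x * g x)" if [measurable]: "g \<in> borel_measurable borel" for g :: "'a \<Rightarrow> real"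
    unfolding M_def using p_meas p_nonneg by (subst integral_density) auto
  have sym: "integral\<^sup>L M (\<lambda>x. f (- x)) = integral\<^sup>L M f"
  proof -
    have "integral\<^sup>L M (\<lambda>x. f (- x)) = integral\<^sup>L lborel (\<lambda>x. p x * f (- x))" by (rule dens) measurable
    also have "\<dots> = integral\<^sup>L lborel (\<lambda>x. (\<lambda>y. p y * f y) (- x))" by (rule arg_cong[where f="integral\<^sup>L lborel"], rule ext) (metis p_sym)
    also have "\<dots> = integral\<^sup>L (distr lborel borel uminus) (\<lambda>y. p y * f y)"
      using p_meas by (subst integral_distr) auto
    also have "\<dots> = integral\<^sup>L lborel (\<lambda>y. p y * f y)" by (simp add: refl_lborel)
    also have "\<dots> = integral\<^sup>L M f" by (rule dens[symmetric]) (rule fm)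
    finally show ?thesis .
  qed
  have avg: "integral\<^sup>L M f = integral\<^sup>L M (\<lambda>x. (f x + f (- x)) / 2)"
    using fi fin sym by simp
  have main: "integral\<^sup>L M f \<ge> B * measure M S"
    if B0: "B \<ge> 0" and pt: "\<And>x. norm x < c / 4 \<Longrightarrow> f x + f (- x) \<ge> 2 * B" for B
  proof -
    have "B * measure M S = integral\<^sup>L M (\<lambda>x. B * indicator S x)"
      using S_sets by simp
    also have "\<dots> \<le> integral\<^sup>L M (\<lambda>x. (f x + f (- x)) / 2)"
    proof (rule integral_mono)
      show "integrable M (\<lambda>x. B * indicator S x)" 
      using integrable_real_indicator[OF S_sets] by (simp add: less_top[symmetric])
      show "integrable M (\<lambda>x. (f x + f (- x)) / 2)" using fi fin by simp
      fix x
      have "f x + f (- x) \<ge> 0" unfolding f_def using pair_nonneg[OF c_pos, of v x] by simp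
      then show "B * indicator S x \<le> (f x + f (- x)) / 2"
        using pt[of x] by (auto simp: S_def indicator_def)
    qed
    finally show ?thesis using avg by simp
  qed
  show ?thesis
  proof (intro conjI impI)
    assume r: "norm v \<le> 3/4 * c"
    have "integral\<^sup>L M f \<ge> (norm v)^2 * measure M S"
      by (rule main) (use pair_small[OF c_pos _ r] in \<open>auto simp: f_def\<close>)
    then show "(\<integral>\<xi>. inner v (clip (v + \<xi>) c) \<partial>(density lborel (\<lambda>x. ennreal (p x))))
             \<ge> (norm v)\<^sup>2 * measure (density lborel (\<lambda>x. ennreal (p x))) {\<xi>. norm \<xi> < c / 4}"
      unfolding M_def f_def S_def .
  next
    assume r: "norm v > 3/4 * c"
    have "integral\<^sup>L M f \<ge> (3/4 * c * norm v) * measure M S"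
      by (rule main) (use pair_large[OF c_pos _ r] c_pos in \<open>auto simp: f_def\<close>)
    then show "(\<integral>\<xi>. inner v (clip (v + \<xi>) c) \<partial>(density lborel (\<lambda>x. ennreal (p x))))
             \<ge> 3/4 * c * norm v * measure (density lborel (\<lambda>x. ennreal (p x))) {\<xi>. norm \<xi> < c / 4}"
      unfolding M_def f_def S_def .
  qed
qed

end
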